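(* Let $\lambda=2\cos(\pi/5)$ and let $H_5$ be the subgroup of $SL(2,\mathbb R)$ generated by $S=\begin{pmatrix}0&1\\-1&0\end{pmatrix}$ and $T=\begin{pmatrix}1&\lambda\\0&1\end{pmatrix}$. Suppose that $H(4)$ contains an element $\sigma$ with $\sigma\equiv\begin{pmatrix}1&4\\0&1\end{pmatrix}\pmod{8}$. Then $[H(2^n):H(2^{n+1})]=2^6$ for every integer $n\ge 2$, and $[H_5:H(2^n)]=2^{6(n-2)}[H_5:H(4)]$ for every integer $n\ge2$.
   Context: For $\alpha\in\mathbb Z[\lambda]$, $H(\alpha)=\{(a_{ij})\in H_5 : a_{11}-1,\ a_{22}-1,\ a_{12},\ a_{21}\in \alpha\mathbb Z[\lambda]\}$. Congruence of matrices modulo $8$ means entrywise congruence modulo the ideal $8\mathbb Z[\lambda]$. *)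

theory Defs
  imports "HOL-Analysis.Analysis" "HOL-Algebra.Coset" "HOL-Algebra.Generated_Groups"
begin

definition lam :: real where "lam = 2 * cos (pi / 5)"

definition Zlam :: "real set" where
  "Zlam = {of_int a + of_int b * lam | a b. True}"

definition in_ideal :: "real \<Rightarrow> real \<Rightarrow> bool" where
  "in_ideal \<alpha> x \<longleftrightarrow> (\<exists>y\<in>Zlam. x = \<alpha> * y)"

definition SL2 :: "(real^2^2) monoid" where
  "SL2 = \<lparr>carrier = {A. det A = 1}, mult = (**), one = mat 1\<rparr>"

definition matS :: "real^2^2" where
  "matS = vector [vector [0, 1], vector [-1, 0]]"

definition matT :: "real^2^2" where
  "matT = vector [vector [1, lam], vector [0, 1]]"

definition H5 :: "(real^2^2) set" where
  "H5 = generate SL2 {matS, matT}"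

definition Hcong :: "real \<Rightarrow> (real^2^2) set" where
  "Hcong \<alpha> = {A \<in> H5. in_ideal \<alpha> (A$1$1 - 1) \<and> in_ideal \<alpha> (A$2$2 - 1)
                    \<and> in_ideal \<alpha> (A$1$2) \<and> in_ideal \<alpha> (A$2$1)}"

definition mat_cong :: "real \<Rightarrow> real^2^2 \<Rightarrow> real^2^2 \<Rightarrow> bool" where
  "mat_cong \<alpha> A B \<longleftrightarrow> (\<forall>i j. in_ideal \<alpha> (A$i$j - B$i$j))"

definition idx :: "(real^2^2) set \<Rightarrow> (real^2^2) set \<Rightarrow> nat" where
  "idx K H = card (rcosets\<^bsub>SL2\<lparr>carrier := K\<rparr>\<^esub> H)"

end

theory Submission
  imports Defs
begin

lemma lam_sq: "lam * lam = lam + 1"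
proof -
  define c where "c = cos (pi/5)"
  have "cos (3 * (pi/5)) = cos (pi - 2 * (pi/5))" by (rule arg_cong[where f=cos]) simp
  also have "\<dots> = - cos (2 * (pi/5))" by (simp only: cos_pi_minus)
  finally have "4 * c^3 - 3*c = -(2*c^2 - 1)" unfolding c_def cos_treble_cos cos_double_cos .
  hence e: "(c + 1) * (4*c^2 - 2*c - 1) = 0" by (simp add: algebra_simps power2_eq_square power3_eq_cube)
  have "-(pi/2) < pi/5" "pi/5 < pi/2" using pi_gt_zero by linarith+
  hence "c > 0" unfolding c_def by (rule cos_gt_zero_pi)
  hence "4*c^2 - 2*c - 1 = 0" using e by simp
  thus ?thesis unfolding lam_def c_def[symmetric] by (simp add: algebra_simps power2_eq_square)
qed

lemma quad_int: "(a::int)^2 + a*b - b^2 = 0 \<Longrightarrow> a = 0 \<and> b = 0"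
proof (induction "nat (\<bar>a\<bar> + \<bar>b\<bar>)" arbitrary: a b rule: less_induct)
  case less
  show ?case
  proof (cases "a = 0 \<and> b = 0")
    case False
    have ev: "even (a^2 + a*b - b^2)" using less.prems by simp
    have ea: "even a \<and> even b"
    proof (rule ccontr)
      assume "\<not> (even a \<and> even b)"
      then consider "odd a" "odd b" | "odd a" "even b" | "even a" "odd b" by blast
      then show False using ev by cases (simp_all add: power2_eq_square)
    qed
    then obtain a' b' where ab: "a = 2*a'" "b = 2*b'" by (auto elim!: evenE)
    have "4 * (a'^2 + a'*b' - b'^2) = 0" using less.prems ab by (simp add: algebra_simps power2_eq_square)
    hence h: "a'^2 + a'*b' - b'^2 = 0" by simp
    have "nat (\<bar>a'\<bar> + \<bar>b'\<bar>) < nat (\<bar>a\<bar> + \<bar>b\<bar>)" using False ab by auto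
    from less.hyps[OF this h] have "a' = 0 \<and> b' = 0" .
    then show ?thesis using ab by simp
  qed auto
qed

lemma lam_indep:
  assumes "of_int a + of_int b * lam = 0" shows "a = 0 \<and> b = 0"
proof -
  have "of_int a = - of_int b * lam" using assms by simp
  hence "(of_int a)^2 = (of_int b)^2 * (lam * lam)" by (simp add: power2_eq_square algebra_simps)
  also have "\<dots> = (of_int b)^2 * lam + (of_int b)^2" by (simp add: lam_sq algebra_simps)
  finally have "real_of_int (a^2 + a*b - b^2) = 0"
    using \<open>of_int a = - of_int b * lam\<close> by (simp add: power2_eq_square algebra_simps)
  hence "a^2 + a*b - b^2 = 0" by linarith
  thus ?thesis by (rule quad_int)
qed

subsection \<open>Z[lambda]\<close>

lemma ZlamI: "x = of_int a + of_int b * lam \<Longrightarrow> x \<in> Zlam"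
  unfolding Zlam_def by blast

lemma ZlamE: "x \<in> Zlam \<Longrightarrow> (\<And>a b. x = of_int a + of_int b * lam \<Longrightarrow> P) \<Longrightarrow> P"
  unfolding Zlam_def by blast

lemma Zlam_int [simp]: "of_int k \<in> Zlam"
  by (rule ZlamI[of _ k 0]) simp
lemma Zlam_0 [simp]: "0 \<in> Zlam" using Zlam_int[of 0] by simp
lemma Zlam_1 [simp]: "1 \<in> Zlam" using Zlam_int[of 1] by simp
lemma Zlam_numeral [simp]: "numeral k \<in> Zlam" using Zlam_int[of "numeral k"] by simp
lemma Zlam_nat [simp]: "of_nat k \<in> Zlam" using Zlam_int[of "int k"] by simp
lemma Zlam_lam [simp]: "lam \<in> Zlam" by (rule ZlamI[of _ 0 1]) simp

lemma Zlam_add [simp]: "x \<in> Zlam \<Longrightarrow> y \<in> Zlam \<Longrightarrow> x + y \<in> Zlam"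
  by (elim ZlamE, rule ZlamI[where a="_ + _" and b="_ + _"]) (simp add: algebra_simps)
lemma Zlam_uminus [simp]: "x \<in> Zlam \<Longrightarrow> - x \<in> Zlam"
  by (elim ZlamE, rule ZlamI[where a="- _" and b="- _"]) (simp add: algebra_simps)
lemma Zlam_diff [simp]: "x \<in> Zlam \<Longrightarrow> y \<in> Zlam \<Longrightarrow> x - y \<in> Zlam"
  using Zlam_add[of x "-y"] by simp
lemma Zlam_mult [simp]: "x \<in> Zlam \<Longrightarrow> y \<in> Zlam \<Longrightarrow> x * y \<in> Zlam"
proof (elim ZlamE)
  fix a b c d assume x: "x = of_int a + of_int b * lam" and y: "y = of_int c + of_int d * lam"
  have "x * y = of_int a * of_int c + (of_int a * of_int d + of_int b * of_int c) * lam + of_int b * of_int d * (lam * lam)"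
    unfolding x y by (simp add: algebra_simps)
  also have "\<dots> = of_int (a*c + b*d) + of_int (a*d + b*c + b*d) * lam"
    by (simp add: lam_sq algebra_simps)
  finally show ?thesis by (rule ZlamI)
qed
lemma Zlam_power [simp]: "x \<in> Zlam \<Longrightarrow> x ^ n \<in> Zlam"
  by (induction n) simp_all

lemma in_idealI: "y \<in> Zlam \<Longrightarrow> x = \<alpha> * y \<Longrightarrow> in_ideal \<alpha> x"
  unfolding in_ideal_def by blast
lemma in_ideal_0 [simp]: "in_ideal \<alpha> 0" by (rule in_idealI[of 0]) simp_all
lemma in_ideal_add [simp]: assumes "in_ideal \<alpha> x" "in_ideal \<alpha> y" shows "in_ideal \<alpha> (x + y)"
proof -
  from assms obtain u w where "u \<in> Zlam" "x = \<alpha> * u" "w \<in> Zlam" "y = \<alpha> * w" unfolding in_ideal_def by blast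
  thus ?thesis by (intro in_idealI[of "u+w"]) (auto simp: algebra_simps)
qed
lemma in_ideal_uminus [simp]: assumes "in_ideal \<alpha> x" shows "in_ideal \<alpha> (- x)"
proof -
  from assms obtain u where "u\<in>Zlam" "x = \<alpha>*u" unfolding in_ideal_def by blast
  thus ?thesis by (intro in_idealI[of "-u"]) (auto simp: algebra_simps)
qed
lemma in_ideal_diff [simp]: "in_ideal \<alpha> x \<Longrightarrow> in_ideal \<alpha> y \<Longrightarrow> in_ideal \<alpha> (x - y)"
  using in_ideal_add[of \<alpha> x "-y"] by simp
lemma in_ideal_multR [simp]: assumes "in_ideal \<alpha> x" "z \<in> Zlam" shows "in_ideal \<alpha> (x * z)"
proof -
  from assms obtain u where "u\<in>Zlam" "x = \<alpha>*u" unfolding in_ideal_def by blast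
  thus ?thesis using assms(2) by (intro in_idealI[of "u*z"]) (auto simp: algebra_simps)
qed
lemma in_ideal_multL [simp]: "in_ideal \<alpha> x \<Longrightarrow> z \<in> Zlam \<Longrightarrow> in_ideal \<alpha> (z * x)"
  using in_ideal_multR[of \<alpha> x z] by (metis mult.commute)
lemma in_ideal_self [simp]: "in_ideal \<alpha> \<alpha>" by (rule in_idealI[of 1]) simp_all
lemma in_ideal_mult2: assumes "in_ideal \<alpha> x" "in_ideal \<beta> y" shows "in_ideal (\<alpha> * \<beta>) (x * y)"
proof -
  from assms obtain u w where "u \<in> Zlam" "x = \<alpha> * u" "w \<in> Zlam" "y = \<beta> * w" unfolding in_ideal_def by blast
  thus ?thesis by (intro in_idealI[of "u*w"]) (auto simp: algebra_simps)
qed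
lemma in_ideal_weaken: assumes "in_ideal (\<alpha> * \<beta>) x" "\<beta> \<in> Zlam" shows "in_ideal \<alpha> x"
proof -
  from assms obtain u where "u\<in>Zlam" "x = (\<alpha>*\<beta>)*u" unfolding in_ideal_def by blast
  thus ?thesis using assms(2) by (intro in_idealI[of "\<beta>*u"]) (auto simp: algebra_simps)
qed
lemma in_ideal_Zlam: "in_ideal \<alpha> x \<Longrightarrow> \<alpha> \<in> Zlam \<Longrightarrow> x \<in> Zlam"
  unfolding in_ideal_def by auto
lemma in_ideal_cancel: "in_ideal (\<alpha> * m) (m * x) \<Longrightarrow> m \<noteq> 0 \<Longrightarrow> in_ideal \<alpha> x"
  unfolding in_ideal_def by (auto simp: algebra_simps)

lemma bits_unique:
  assumes "in_ideal 2 ((of_bool p - of_bool p') + (of_bool q - of_bool q') * lam)"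
  shows "p = p' \<and> q = q'"
proof -
  from assms obtain z where z: "z \<in> Zlam" "(of_bool p - of_bool p') + (of_bool q - of_bool q') * lam = 2 * z"
    unfolding in_ideal_def by blast
  from z(1) obtain a b where "z = of_int a + of_int b * lam" by (rule ZlamE)
  with z(2) have "(of_bool p - of_bool p') + (of_bool q - of_bool q') * lam = 2 * (of_int a + of_int b * lam)" by simp
  hence "of_int (of_bool p - of_bool p' - 2*a) + of_int (of_bool q - of_bool q' - 2*b) * lam = 0"
    by (simp add: algebra_simps)
  from lam_indep[OF this] have "of_bool p - of_bool p' = 2*a" "of_bool q - of_bool q' = 2*b" by auto
  hence e1: "(of_bool p - of_bool p' :: int) = 2*a" and e2: "(of_bool q - of_bool q' :: int) = 2*b" by simp_all
  have "p = p'"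
  proof (rule ccontr)
    assume "p \<noteq> p'"
    hence "(of_bool p - of_bool p' :: int) = 1 \<or> (of_bool p - of_bool p' :: int) = -1" by (cases p; cases p') auto
    hence "2*a = 1 \<or> 2*a = -1" using e1 by simp
    thus False by presburger
  qed
  moreover have "q = q'"
  proof (rule ccontr)
    assume "q \<noteq> q'"
    hence "(of_bool q - of_bool q' :: int) = 1 \<or> (of_bool q - of_bool q' :: int) = -1" by (cases q; cases q') auto
    hence "2*b = 1 \<or> 2*b = -1" using e2 by simp
    thus False by presburger
  qed
  ultimately show ?thesis by simp
qed

lemma bits_exist:
  assumes "y \<in> Zlam" shows "\<exists>p q. in_ideal 2 (y - (of_bool p + of_bool q * lam))"
proof -
  from assms obtain a b where y: "y = of_int a + of_int b * lam" by (rule ZlamE)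
  have "y - (of_bool (odd a) + of_bool (odd b) * lam) = 2 * (of_int (a div 2) + of_int (b div 2) * lam)"
  proof -
    have "a = 2 * (a div 2) + of_bool (odd a)" "b = 2 * (b div 2) + of_bool (odd b)"
      by (simp_all add: of_bool_odd_eq_mod_2)
    hence "real_of_int a = real_of_int (2 * (a div 2) + of_bool (odd a))" "real_of_int b = real_of_int (2 * (b div 2) + of_bool (odd b))"
      by simp_all
    hence "real_of_int a = 2 * of_int (a div 2) + of_bool (odd a)" "real_of_int b = 2 * of_int (b div 2) + of_bool (odd b)"
      by simp_all
    thus ?thesis unfolding y by (simp add: algebra_simps)
  qed
  thus ?thesis by (intro exI in_idealI[of "of_int (a div 2) + of_int (b div 2) * lam"]) auto
qed


subsection \<open>2x2 matrices\<close>

definition mk :: "real \<Rightarrow> real \<Rightarrow> real \<Rightarrow> real \<Rightarrow> real^2^2" where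
  "mk a b c d = vector [vector [a, b], vector [c, d]]"

lemma mk_entries [simp]: "mk a b c d $ 1 $ 1 = a" "mk a b c d $ 1 $ 2 = b"
   "mk a b c d $ 2 $ 1 = c" "mk a b c d $ 2 $ 2 = d"
  by (simp_all add: mk_def)

lemma mat_eq_iff: "(A::real^2^2) = B \<longleftrightarrow> A$1$1 = B$1$1 \<and> A$1$2 = B$1$2 \<and> A$2$1 = B$2$1 \<and> A$2$2 = B$2$2"
  by (auto simp: vec_eq_iff forall_2)

lemma mk_expand: "(A::real^2^2) = mk (A$1$1) (A$1$2) (A$2$1) (A$2$2)"
  by (simp add: mat_eq_iff)

lemma mk_eq_mk [simp]: "mk a b c d = mk a' b' c' d' \<longleftrightarrow> a = a' \<and> b = b' \<and> c = c' \<and> d = d'"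
  by (simp add: mat_eq_iff)

lemma mk_mult [simp]: "mk a b c d ** mk a' b' c' d' = mk (a*a' + b*c') (a*b' + b*d') (c*a' + d*c') (c*b' + d*d')"
  by (simp add: mat_eq_iff matrix_matrix_mult_def sum_2)

lemma mk_add [simp]: "mk a b c d + mk a' b' c' d' = mk (a+a') (b+b') (c+c') (d+d')"
  by (simp add: mat_eq_iff)

lemma mk_diff [simp]: "mk a b c d - mk a' b' c' d' = mk (a-a') (b-b') (c-c') (d-d')"
  by (simp add: mat_eq_iff)

lemma mk_scaleR [simp]: "r *\<^sub>R mk a b c d = mk (r*a) (r*b) (r*c) (r*d)"
  by (simp add: mat_eq_iff)

lemma mat1_mk: "(mat 1 :: real^2^2) = mk 1 0 0 1"
  by (simp add: mat_eq_iff mat_def)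

lemma det_mk [simp]: "det (mk a b c d) = a*d - b*c"
  by (simp add: det_2)

lemma mk_cases: obtains a b c d where "(A::real^2^2) = mk a b c d"
  using mk_expand by blast

definition adj :: "real^2^2 \<Rightarrow> real^2^2" where
  "adj A = mk (A$2$2) (- A$1$2) (- A$2$1) (A$1$1)"

lemma adj_mk [simp]: "adj (mk a b c d) = mk d (-b) (-c) a" by (simp add: adj_def)

lemma adj_mult: "det A = 1 \<Longrightarrow> adj A ** A = mat 1"
  by (cases A rule: mk_cases) (simp add: mat1_mk algebra_simps)
lemma mult_adj: "det A = 1 \<Longrightarrow> A ** adj A = mat 1"
  by (cases A rule: mk_cases) (simp add: mat1_mk algebra_simps)
lemma det_adj [simp]: "det (adj A) = det A"
  by (cases A rule: mk_cases) (simp add: algebra_simps)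

lemma SL2_carrier [simp]: "carrier SL2 = {A. det A = 1}" by (simp add: SL2_def)
lemma SL2_mult [simp]: "mult SL2 = (**)" by (simp add: SL2_def)
lemma SL2_one [simp]: "one SL2 = mat 1" by (simp add: SL2_def)

lemma group_SL2: "group SL2"
proof (rule groupI)
  fix x y assume "x \<in> carrier SL2" "y \<in> carrier SL2"
  thus "x \<otimes>\<^bsub>SL2\<^esub> y \<in> carrier SL2" by (simp add: det_mul)
next
  show "\<one>\<^bsub>SL2\<^esub> \<in> carrier SL2" by simp
next
  fix x y z show "x \<otimes>\<^bsub>SL2\<^esub> y \<otimes>\<^bsub>SL2\<^esub> z = x \<otimes>\<^bsub>SL2\<^esub> (y \<otimes>\<^bsub>SL2\<^esub> z)"
    by (simp add: matrix_mul_assoc)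
next
  fix x show "\<one>\<^bsub>SL2\<^esub> \<otimes>\<^bsub>SL2\<^esub> x = x" by (simp add: matrix_mul_lid)
next
  fix x assume "x \<in> carrier SL2"
  hence d: "det x = 1" by simp
  show "\<exists>y\<in>carrier SL2. y \<otimes>\<^bsub>SL2\<^esub> x = \<one>\<^bsub>SL2\<^esub>"
  proof (intro bexI)
    show "adj x \<otimes>\<^bsub>SL2\<^esub> x = \<one>\<^bsub>SL2\<^esub>" using d by (simp add: adj_mult)
    show "adj x \<in> carrier SL2" using d by simp
  qed
qed

lemma SL2_inv: assumes "det A = 1" shows "inv\<^bsub>SL2\<^esub> A = adj A"
proof -
  interpret group SL2 by (rule group_SL2)
  have "adj A \<otimes>\<^bsub>SL2\<^esub> A = \<one>\<^bsub>SL2\<^esub>" using assms by (simp add: adj_mult)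
  moreover have "adj A \<in> carrier SL2" using assms by simp
  ultimately show ?thesis using assms by (simp add: inv_equality)
qed


definition Zmat :: "real^2^2 \<Rightarrow> bool" where
  "Zmat A \<longleftrightarrow> A$1$1 \<in> Zlam \<and> A$1$2 \<in> Zlam \<and> A$2$1 \<in> Zlam \<and> A$2$2 \<in> Zlam"

lemma Zmat_mk [simp]: "Zmat (mk a b c d) \<longleftrightarrow> a \<in> Zlam \<and> b \<in> Zlam \<and> c \<in> Zlam \<and> d \<in> Zlam"
  by (simp add: Zmat_def)

lemma Zmat_mult [simp]: "Zmat A \<Longrightarrow> Zmat B \<Longrightarrow> Zmat (A ** B)"
  by (cases A rule: mk_cases, cases B rule: mk_cases) simp
lemma Zmat_add [simp]: "Zmat A \<Longrightarrow> Zmat B \<Longrightarrow> Zmat (A + B)"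
  by (cases A rule: mk_cases, cases B rule: mk_cases) simp
lemma Zmat_diff [simp]: "Zmat A \<Longrightarrow> Zmat B \<Longrightarrow> Zmat (A - B)"
  by (cases A rule: mk_cases, cases B rule: mk_cases) simp
lemma Zmat_scaleR [simp]: "Zmat A \<Longrightarrow> r \<in> Zlam \<Longrightarrow> Zmat (r *\<^sub>R A)"
  by (cases A rule: mk_cases) simp
lemma Zmat_adj [simp]: "Zmat A \<Longrightarrow> Zmat (adj A)"
  by (cases A rule: mk_cases) simp
lemma Zmat_one [simp]: "Zmat (mat 1)"
  by (simp add: mat1_mk)

lemma mat_cong_mk [simp]: "mat_cong \<alpha> (mk a b c d) (mk a' b' c' d') \<longleftrightarrow>
   in_ideal \<alpha> (a - a') \<and> in_ideal \<alpha> (b - b') \<and> in_ideal \<alpha> (c - c') \<and> in_ideal \<alpha> (d - d')"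
  by (simp add: mat_cong_def forall_2)

lemma mat_cong_refl [simp]: "mat_cong \<alpha> A A"
  by (simp add: mat_cong_def)
lemma mat_cong_sym: "mat_cong \<alpha> A B \<Longrightarrow> mat_cong \<alpha> B A"
  unfolding mat_cong_def using in_ideal_uminus by fastforce
lemma mat_cong_trans: assumes "mat_cong \<alpha> A B" "mat_cong \<alpha> B C" shows "mat_cong \<alpha> A C"
  unfolding mat_cong_def
proof (intro allI)
  fix i j
  have "A$i$j - C$i$j = (A$i$j - B$i$j) + (B$i$j - C$i$j)" by simp
  thus "in_ideal \<alpha> (A$i$j - C$i$j)" using assms unfolding mat_cong_def by (metis in_ideal_add)
qed
lemma ideal_lin2R: "in_ideal \<alpha> (a - a') \<Longrightarrow> in_ideal \<alpha> (b - b') \<Longrightarrow> x \<in> Zlam \<Longrightarrow> z \<in> Zlam \<Longrightarrow>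
   in_ideal \<alpha> ((a*x + b*z) - (a'*x + b'*z))"
proof -
  assume h: "in_ideal \<alpha> (a - a')" "in_ideal \<alpha> (b - b')" "x \<in> Zlam" "z \<in> Zlam"
  have "(a*x + b*z) - (a'*x + b'*z) = (a - a')*x + (b - b')*z" by (simp add: algebra_simps)
  thus ?thesis using h by simp
qed
lemma ideal_lin2L: "in_ideal \<alpha> (a - a') \<Longrightarrow> in_ideal \<alpha> (b - b') \<Longrightarrow> x \<in> Zlam \<Longrightarrow> z \<in> Zlam \<Longrightarrow>
   in_ideal \<alpha> ((x*a + z*b) - (x*a' + z*b'))"
proof -
  assume h: "in_ideal \<alpha> (a - a')" "in_ideal \<alpha> (b - b')" "x \<in> Zlam" "z \<in> Zlam"
  have "(x*a + z*b) - (x*a' + z*b') = x*(a - a') + z*(b - b')" by (simp add: algebra_simps)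
  thus ?thesis using h by simp
qed
lemma ideal_add2: "in_ideal \<alpha> (a - a') \<Longrightarrow> in_ideal \<alpha> (b - b') \<Longrightarrow> in_ideal \<alpha> ((a + b) - (a' + b'))"
proof -
  assume h: "in_ideal \<alpha> (a - a')" "in_ideal \<alpha> (b - b')"
  have e: "(a + b) - (a' + b') = (a - a') + (b - b')" by (simp add: algebra_simps)
  show ?thesis unfolding e by (rule in_ideal_add[OF h])
qed

lemma mat_cong_multR: assumes "mat_cong \<alpha> A B" "Zmat C" shows "mat_cong \<alpha> (A ** C) (B ** C)"
proof -
  obtain a b c d where A: "A = mk a b c d" by (rule mk_cases)
  obtain a' b' c' d' where B: "B = mk a' b' c' d'" by (rule mk_cases)
  obtain x y z w where C: "C = mk x y z w" by (rule mk_cases)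
  show ?thesis using assms unfolding A B C mk_mult mat_cong_mk Zmat_mk by (blast intro: ideal_lin2R)
qed
lemma mat_cong_multL: assumes "mat_cong \<alpha> A B" "Zmat C" shows "mat_cong \<alpha> (C ** A) (C ** B)"
proof -
  obtain a b c d where A: "A = mk a b c d" by (rule mk_cases)
  obtain a' b' c' d' where B: "B = mk a' b' c' d'" by (rule mk_cases)
  obtain x y z w where C: "C = mk x y z w" by (rule mk_cases)
  show ?thesis using assms unfolding A B C mk_mult mat_cong_mk Zmat_mk by (blast intro: ideal_lin2L)
qed
lemma mat_cong_add: assumes "mat_cong \<alpha> A B" "mat_cong \<alpha> C D" shows "mat_cong \<alpha> (A + C) (B + D)"
proof -
  obtain a b c d where A: "A = mk a b c d" by (rule mk_cases)
  obtain a' b' c' d' where B: "B = mk a' b' c' d'" by (rule mk_cases)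
  obtain x y z w where C: "C = mk x y z w" by (rule mk_cases)
  obtain x' y' z' w' where D: "D = mk x' y' z' w'" by (rule mk_cases)
  show ?thesis using assms unfolding A B C D mk_add mat_cong_mk by (blast intro: ideal_add2)
qed
lemma mat_cong_weaken: "mat_cong (\<alpha> * \<beta>) A B \<Longrightarrow> \<beta> \<in> Zlam \<Longrightarrow> mat_cong \<alpha> A B"
  unfolding mat_cong_def using in_ideal_weaken by blast

lemma matS_mk: "matS = mk 0 1 (-1) 0" by (simp add: matS_def mk_def)
lemma matT_mk: "matT = mk 1 lam 0 1" by (simp add: matT_def mk_def)

lemma gens_carrier: "{matS, matT} \<subseteq> carrier SL2"
  by (simp add: matS_mk matT_mk)

lemma H5_subgroup: "subgroup H5 SL2"
  unfolding H5_def by (rule group.generate_is_subgroup[OF group_SL2 gens_carrier])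

lemma H5_det: "A \<in> H5 \<Longrightarrow> det A = 1"
  using subgroup.subset[OF H5_subgroup] by auto

lemma H5_mult [simp]: "A \<in> H5 \<Longrightarrow> B \<in> H5 \<Longrightarrow> A ** B \<in> H5"
  using subgroup.m_closed[OF H5_subgroup] by fastforce

lemma H5_one [simp]: "mat 1 \<in> H5"
  using subgroup.one_closed[OF H5_subgroup] by simp

lemma H5_adj [simp]: "A \<in> H5 \<Longrightarrow> adj A \<in> H5"
  using subgroup.m_inv_closed[OF H5_subgroup, of A] SL2_inv[OF H5_det] by simp

lemma H5_S [simp]: "matS \<in> H5" unfolding H5_def by (rule generate.incl) simp
lemma H5_T [simp]: "matT \<in> H5" unfolding H5_def by (rule generate.incl) simp

lemma H5_Zmat: "A \<in> H5 \<Longrightarrow> Zmat A"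
  unfolding H5_def
proof (induction rule: generate.induct)
  case one then show ?case by simp
next
  case (incl h) then show ?case by (auto simp: matS_mk matT_mk)
next
  case (inv h) then show ?case by (auto simp: matS_mk matT_mk SL2_inv)
next
  case (eng h1 h2) then show ?case by simp
qed


subsection \<open>Congruence subgroups\<close>

lemma mat_cong_ex: assumes "mat_cong \<alpha> A B" shows "\<exists>E. Zmat E \<and> A = B + \<alpha> *\<^sub>R E"
proof -
  obtain a b c d where A: "A = mk a b c d" by (rule mk_cases)
  obtain a' b' c' d' where B: "B = mk a' b' c' d'" by (rule mk_cases)
  from assms obtain x y z w where "x \<in> Zlam" "a - a' = \<alpha> * x" "y \<in> Zlam" "b - b' = \<alpha> * y"
     "z \<in> Zlam" "c - c' = \<alpha> * z" "w \<in> Zlam" "d - d' = \<alpha> * w"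
    unfolding A B mat_cong_mk in_ideal_def by blast
  thus ?thesis unfolding A B by (intro exI[of _ "mk x y z w"]) (simp add: algebra_simps)
qed

lemma mat_congI: assumes "Zmat E" "A = B + \<alpha> *\<^sub>R E" shows "mat_cong \<alpha> A B"
proof -
  obtain x y z w where E: "E = mk x y z w" by (rule mk_cases)
  obtain a' b' c' d' where B: "B = mk a' b' c' d'" by (rule mk_cases)
  show ?thesis using assms unfolding E B by (auto intro: in_idealI)
qed

lemma Hcong_iff: "A \<in> Hcong \<alpha> \<longleftrightarrow> A \<in> H5 \<and> mat_cong \<alpha> A (mat 1)"
  by (cases A rule: mk_cases) (auto simp: Hcong_def mat1_mk)

lemma Hcong_H5: "A \<in> Hcong \<alpha> \<Longrightarrow> A \<in> H5"
  by (simp add: Hcong_iff)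

lemma Hcong_subgroup: "subgroup (Hcong \<alpha>) SL2"
proof (rule subgroup.intro)
  show "Hcong \<alpha> \<subseteq> carrier SL2" using H5_det Hcong_H5 by auto
next
  fix A B assume A: "A \<in> Hcong \<alpha>" and B: "B \<in> Hcong \<alpha>"
  have "mat_cong \<alpha> (A ** B) (mat 1 ** B)"
    by (rule mat_cong_multR) (use A B in \<open>auto simp: Hcong_iff intro: H5_Zmat\<close>)
  hence "mat_cong \<alpha> (A ** B) (mat 1)" using B by (auto simp: Hcong_iff intro: mat_cong_trans)
  thus "A \<otimes>\<^bsub>SL2\<^esub> B \<in> Hcong \<alpha>" using A B by (simp add: Hcong_iff)
next
  show "\<one>\<^bsub>SL2\<^esub> \<in> Hcong \<alpha>" by (simp add: Hcong_iff)
next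
  fix A assume A: "A \<in> Hcong \<alpha>"
  hence h: "A \<in> H5" "mat_cong \<alpha> A (mat 1)" by (auto simp: Hcong_iff)
  have "mat_cong \<alpha> (adj A ** mat 1) (adj A ** A)"
    by (rule mat_cong_multL[OF mat_cong_sym[OF h(2)]]) (simp add: H5_Zmat h(1))
  hence "mat_cong \<alpha> (adj A) (mat 1)" using adj_mult[OF H5_det[OF h(1)]] by simp
  thus "inv\<^bsub>SL2\<^esub> A \<in> Hcong \<alpha>" using h SL2_inv[OF H5_det[OF h(1)]] by (simp add: Hcong_iff)
qed

lemma rcos_SL2: "H #>\<^bsub>SL2\<^esub> a = {h ** a | h. h \<in> H}"
  by (auto simp: r_coset_def)

lemma idx_eq: "idx K H = card ((\<lambda>a. H #>\<^bsub>SL2\<^esub> a) ` K)"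
proof -
  have "rcosets\<^bsub>SL2\<lparr>carrier := K\<rparr>\<^esub> H = (\<lambda>a. H #>\<^bsub>SL2\<^esub> a) ` K"
    by (auto simp: RCOSETS_def r_coset_def SL2_def)
  thus ?thesis by (simp add: idx_def)
qed

lemma coset_eq:
  assumes a: "a \<in> H5" and b: "b \<in> H5"
  shows "Hcong \<alpha> #>\<^bsub>SL2\<^esub> a = Hcong \<alpha> #>\<^bsub>SL2\<^esub> b \<longleftrightarrow> mat_cong \<alpha> a b"
proof
  assume eq: "Hcong \<alpha> #>\<^bsub>SL2\<^esub> a = Hcong \<alpha> #>\<^bsub>SL2\<^esub> b"
  have "mat 1 \<in> Hcong \<alpha>" by (simp add: Hcong_iff)
  moreover have "a = mat 1 ** a" by simp
  ultimately have "a \<in> {h ** a | h. h \<in> Hcong \<alpha>}" by blast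
  hence "a \<in> Hcong \<alpha> #>\<^bsub>SL2\<^esub> b" using eq by (simp only: rcos_SL2)
  then obtain h where h: "h \<in> Hcong \<alpha>" "a = h ** b" unfolding rcos_SL2 by blast
  have "mat_cong \<alpha> (h ** b) (mat 1 ** b)"
    by (rule mat_cong_multR) (use h(1) b in \<open>auto simp: Hcong_iff intro: H5_Zmat\<close>)
  thus "mat_cong \<alpha> a b" using h(2) by simp
next
  have key: "Hcong \<alpha> #>\<^bsub>SL2\<^esub> x \<subseteq> Hcong \<alpha> #>\<^bsub>SL2\<^esub> y"
    if x: "x \<in> H5" and y: "y \<in> H5" and c: "mat_cong \<alpha> x y" for x y
  proof
    fix z assume "z \<in> Hcong \<alpha> #>\<^bsub>SL2\<^esub> x"
    then obtain h where h: "h \<in> Hcong \<alpha>" "z = h ** x" unfolding rcos_SL2 by blast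
    define k where "k = h ** x ** adj y"
    have hH: "h \<in> H5" "mat_cong \<alpha> h (mat 1)" using h(1) by (auto simp: Hcong_iff)
    have "mat_cong \<alpha> (h ** x ** adj y) (mat 1 ** x ** adj y)"
      using hH x y H5_Zmat by (intro mat_cong_multR) auto
    moreover have "mat_cong \<alpha> (x ** adj y) (y ** adj y)"
      using c y H5_Zmat by (intro mat_cong_multR) auto
    ultimately have "mat_cong \<alpha> k (mat 1)"
      unfolding k_def using mult_adj[OF H5_det[OF y]] mat_cong_trans by (metis matrix_mul_assoc matrix_mul_lid)
    moreover have "k \<in> H5" unfolding k_def using hH x y by simp
    ultimately have kH: "k \<in> Hcong \<alpha>" by (simp add: Hcong_iff)
    have "k ** y = h ** x" unfolding k_def
      by (simp add: matrix_mul_assoc[symmetric] adj_mult[OF H5_det[OF y]])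
    thus "z \<in> Hcong \<alpha> #>\<^bsub>SL2\<^esub> y" using kH h(2) unfolding rcos_SL2 by (metis (mono_tags, lifting) mem_Collect_eq)
  qed
  assume "mat_cong \<alpha> a b"
  thus "Hcong \<alpha> #>\<^bsub>SL2\<^esub> a = Hcong \<alpha> #>\<^bsub>SL2\<^esub> b"
    using key[OF a b] key[OF b a] mat_cong_sym by blast
qed


subsection \<open>Levels\<close>

definition lev :: "real \<Rightarrow> real^2^2 \<Rightarrow> real^2^2 \<Rightarrow> bool" where
  "lev m A X \<longleftrightarrow> A \<in> H5 \<and> Zmat X \<and> mat_cong (2*m) A (mat 1 + m *\<^sub>R X)"

definition good :: "real \<Rightarrow> bool" where
  "good m \<longleftrightarrow> (\<exists>w\<in>Zlam. m = 4*w) \<and> m \<noteq> 0"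

lemma good_Zlam: "good m \<Longrightarrow> m \<in> Zlam"
  unfolding good_def by auto

lemma good_double: "good m \<Longrightarrow> good (2*m)"
  unfolding good_def by (auto intro!: bexI[of _ "2 * _"])

lemma good_pow: "n \<ge> 2 \<Longrightarrow> good (2 ^ n)"
proof -
  assume "n \<ge> 2"
  then obtain k where "n = k + 2" by (metis add.commute le_Suc_ex)
  hence "(2::real) ^ n = 4 * 2 ^ k" by (simp add: power_add)
  thus "good (2 ^ n)" unfolding good_def by (intro conjI bexI[of _ "2^k"]) auto
qed

lemma lev_Hcong: assumes "lev m A X" "m \<in> Zlam" shows "A \<in> Hcong m"
proof -
  have "mat_cong (m*2) A (mat 1 + m *\<^sub>R X)" using assms(1) by (simp add: lev_def mult.commute)
  hence c1: "mat_cong m A (mat 1 + m *\<^sub>R X)" by (rule mat_cong_weaken) simp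
  have "mat_cong m (mat 1 + m *\<^sub>R X) (mat 1)" using assms(1) by (intro mat_congI[of X]) (auto simp: lev_def)
  with c1 have "mat_cong m A (mat 1)" by (rule mat_cong_trans)
  thus ?thesis using assms(1) by (simp add: Hcong_iff lev_def)
qed

lemma lev_one: "lev m (mat 1) 0"
  by (simp add: lev_def Zmat_def)

lemma lev_mult:
  assumes A: "lev m A X" and B: "lev m B Y" and g: "good m"
  shows "lev m (A ** B) (X + Y)"
proof -
  from g obtain w where w: "w \<in> Zlam" "m = 4*w" unfolding good_def by blast
  have mZ: "m \<in> Zlam" using g by (rule good_Zlam)
  have ZX: "Zmat X" "Zmat Y" "Zmat A" "Zmat B" using A B by (auto simp: lev_def H5_Zmat)
  have s1: "mat_cong (2*m) (A ** B) ((mat 1 + m *\<^sub>R X) ** B)"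
    using A ZX by (intro mat_cong_multR) (auto simp: lev_def)
  have s2: "mat_cong (2*m) ((mat 1 + m *\<^sub>R X) ** B) ((mat 1 + m *\<^sub>R X) ** (mat 1 + m *\<^sub>R Y))"
    using B ZX mZ by (intro mat_cong_multL) (auto simp: lev_def)
  have e: "(mat 1 + m *\<^sub>R X) ** (mat 1 + m *\<^sub>R Y) = (mat 1 + m *\<^sub>R (X + Y)) + (2*m) *\<^sub>R ((2*w) *\<^sub>R (X ** Y))"
    unfolding w(2) by (cases X rule: mk_cases, cases Y rule: mk_cases) (simp add: mat1_mk algebra_simps)
  have s3: "mat_cong (2*m) ((mat 1 + m *\<^sub>R X) ** (mat 1 + m *\<^sub>R Y)) (mat 1 + m *\<^sub>R (X + Y))"
    using ZX w(1) by (intro mat_congI[OF _ e]) simp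
  show ?thesis using A B ZX mat_cong_trans[OF mat_cong_trans[OF s1 s2] s3] by (simp add: lev_def)
qed

lemma lev_conj:
  assumes A: "lev m A X" and g: "g \<in> H5"
  shows "lev m (g ** A ** adj g) (g ** X ** adj g)"
proof -
  have Zg: "Zmat g" "Zmat (adj g)" using g by (auto simp: H5_Zmat)
  have s1: "mat_cong (2*m) (g ** A ** adj g) (g ** (mat 1 + m *\<^sub>R X) ** adj g)"
    using A Zg by (intro mat_cong_multR mat_cong_multL) (auto simp: lev_def)
  have "g ** (mat 1 + m *\<^sub>R X) ** adj g = g ** adj g + m *\<^sub>R (g ** X ** adj g)"
    by (cases g rule: mk_cases, cases X rule: mk_cases) (simp add: mat1_mk algebra_simps)
  also have "\<dots> = mat 1 + m *\<^sub>R (g ** X ** adj g)" using mult_adj[OF H5_det[OF g]] by simp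
  finally show ?thesis using s1 A g Zg by (simp add: lev_def)
qed

lemma lev_square:
  assumes A: "lev m A X" and g: "good m"
  shows "lev (2*m) (A ** A) X"
proof -
  from g obtain w where w: "w \<in> Zlam" "m = 4*w" unfolding good_def by blast
  from A have ZX: "Zmat X" and AH: "A \<in> H5" by (auto simp: lev_def)
  from A obtain E where E: "Zmat E" "A = (mat 1 + m *\<^sub>R X) + (2*m) *\<^sub>R E"
    unfolding lev_def using mat_cong_ex by blast
  define W where "W = E + w *\<^sub>R (X ** X) + (2*w) *\<^sub>R (X ** E + E ** X) + (4*w) *\<^sub>R (E ** E)"
  have ZW: "Zmat W" unfolding W_def using ZX E(1) w(1) by simp
  have "A ** A = (mat 1 + (2*m) *\<^sub>R X) + (2*(2*m)) *\<^sub>R W"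
    unfolding E(2) W_def w(2)
    by (cases X rule: mk_cases, cases E rule: mk_cases) (simp add: mat1_mk algebra_simps)
  hence "mat_cong (2*(2*m)) (A ** A) (mat 1 + (2*m) *\<^sub>R X)" by (rule mat_congI[OF ZW])
  thus ?thesis using AH ZX by (simp add: lev_def)
qed

lemma lev_reduce:
  assumes A: "lev m A X" and c: "mat_cong 2 X Y" and Y: "Zmat Y"
  shows "lev m A Y"
proof -
  from c obtain F where F: "Zmat F" "X = Y + 2 *\<^sub>R F" using mat_cong_ex by blast
  have "mat 1 + m *\<^sub>R X = (mat 1 + m *\<^sub>R Y) + (2*m) *\<^sub>R F"
    unfolding F(2) by (simp add: algebra_simps scaleR_add_right)
  hence "mat_cong (2*m) (mat 1 + m *\<^sub>R X) (mat 1 + m *\<^sub>R Y)" by (rule mat_congI[OF F(1)])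
  thus ?thesis using A Y mat_cong_trans by (auto simp: lev_def)
qed



lemma cong_lift: assumes "mat_cong 2 X Y" shows "mat_cong (2*m) (mat 1 + m *\<^sub>R X) (mat 1 + m *\<^sub>R Y)"
proof -
  from assms obtain F where F: "Zmat F" "X = Y + 2 *\<^sub>R F" using mat_cong_ex by blast
  have "mat 1 + m *\<^sub>R X = (mat 1 + m *\<^sub>R Y) + (2*m) *\<^sub>R F"
    unfolding F(2) by (simp add: algebra_simps scaleR_add_right)
  thus ?thesis by (rule mat_congI[OF F(1)])
qed

lemma cong_unlift: assumes "mat_cong (2*m) (mat 1 + m *\<^sub>R X) (mat 1 + m *\<^sub>R Y)" "m \<noteq> 0"
  shows "mat_cong 2 X Y"
proof -
  from assms(1) obtain E where E: "Zmat E" "mat 1 + m *\<^sub>R X = (mat 1 + m *\<^sub>R Y) + (2*m) *\<^sub>R E"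
    using mat_cong_ex by blast
  hence "m *\<^sub>R X = m *\<^sub>R (Y + 2 *\<^sub>R E)" by (simp add: algebra_simps scaleR_add_right)
  hence "X = Y + 2 *\<^sub>R E" using assms(2) by simp
  thus ?thesis by (rule mat_congI[OF E(1)])
qed

lemma lev_cong_res: assumes "lev m A X" "lev m B Y" "mat_cong (2*m) A B" "m \<noteq> 0"
  shows "mat_cong 2 X Y"
proof -
  have "mat_cong (2*m) (mat 1 + m *\<^sub>R X) (mat 1 + m *\<^sub>R Y)"
    using assms(1-3) unfolding lev_def by (meson mat_cong_sym mat_cong_trans)
  thus ?thesis using assms(4) by (rule cong_unlift)
qed

lemma res_exists:
  assumes A: "A \<in> Hcong m" and g: "good m"
  shows "\<exists>x y z w. x \<in> Zlam \<and> y \<in> Zlam \<and> z \<in> Zlam \<and> w \<in> Zlam \<and> A = mat 1 + m *\<^sub>R mk x y z w \<and> in_ideal 2 (x + w)"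
proof -
  from g obtain q where v: "q \<in> Zlam" "m = 4*q" "m \<noteq> 0" unfolding good_def by blast
  from A have "mat_cong m A (mat 1)" and AH: "A \<in> H5" by (auto simp: Hcong_iff)
  then obtain E where E: "Zmat E" "A = mat 1 + m *\<^sub>R E" using mat_cong_ex by blast
  obtain x y z w where Ee: "E = mk x y z w" by (rule mk_cases)
  have "det A = 1" using AH by (rule H5_det)
  hence "(1 + m*x) * (1 + m*w) - (m*y) * (m*z) = 1" unfolding E(2) Ee by (simp add: mat1_mk)
  hence "m * ((x + w) + m * (x*w - y*z)) = 0" by (simp add: algebra_simps)
  hence s0: "(x + w) + m * (x*w - y*z) = 0" using v(3) by simp
  have "x + w = - (m * (x*w - y*z))" using s0 by linarith
  hence "x + w = 2 * (- (2*q) * (x*w - y*z))" unfolding v(2) by simp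
  moreover have "- (2*q) * (x*w - y*z) \<in> Zlam" using E(1) v(1) unfolding Ee by simp
  ultimately have "in_ideal 2 (x + w)" by (intro in_idealI) 
  thus ?thesis using E Ee by auto
qed

lemma bits_unique2:
  assumes "in_ideal 2 ((of_bool p + of_bool q * lam) - (of_bool p' + of_bool q' * lam))"
  shows "p = p' \<and> q = q'"
proof -
  have "(of_bool p + of_bool q * lam) - (of_bool p' + of_bool q' * lam) = (of_bool p - of_bool p') + (of_bool q - of_bool q') * lam"
    by (simp add: algebra_simps)
  thus ?thesis using assms bits_unique by metis
qed

definition rb :: "bool \<Rightarrow> bool \<Rightarrow> real" where "rb p q = of_bool p + of_bool q * lam"

lemma rb_Zlam [simp]: "rb p q \<in> Zlam" by (simp add: rb_def)

definition Mres :: "bool \<times> bool \<times> bool \<times> bool \<times> bool \<times> bool \<Rightarrow> real^2^2" where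
  "Mres t = (case t of (t1,t2,t3,t4,t5,t6) \<Rightarrow> mk (rb t1 t2) (rb t3 t4) (rb t5 t6) (rb t1 t2))"

lemma Mres_Zmat: "Zmat (Mres t)"
  by (cases t) (simp add: Mres_def)

lemma Mres_inj: assumes "mat_cong 2 (Mres t) (Mres t')" shows "t = t'"
proof -
  obtain t1 t2 t3 t4 t5 t6 where t: "t = (t1,t2,t3,t4,t5,t6)" by (cases t) auto
  obtain s1 s2 s3 s4 s5 s6 where s: "t' = (s1,s2,s3,s4,s5,s6)" by (cases t') auto
  from assms have "in_ideal 2 (rb t1 t2 - rb s1 s2)" "in_ideal 2 (rb t3 t4 - rb s3 s4)" "in_ideal 2 (rb t5 t6 - rb s5 s6)"
    unfolding t s Mres_def by simp_all
  thus ?thesis unfolding t s rb_def using bits_unique2 by blast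
qed

lemma Mres_exists:
  assumes "x \<in> Zlam" "y \<in> Zlam" "z \<in> Zlam" "w \<in> Zlam" "in_ideal 2 (x + w)"
  shows "\<exists>t. mat_cong 2 (mk x y z w) (Mres t)"
proof -
  obtain p1 q1 where 1: "in_ideal 2 (x - rb p1 q1)" using bits_exist[OF assms(1)] unfolding rb_def by blast
  obtain p3 q3 where 3: "in_ideal 2 (y - rb p3 q3)" using bits_exist[OF assms(2)] unfolding rb_def by blast
  obtain p5 q5 where 5: "in_ideal 2 (z - rb p5 q5)" using bits_exist[OF assms(3)] unfolding rb_def by blast
  have e: "w - rb p1 q1 = (x + w) - (x - rb p1 q1) - 2 * rb p1 q1" by simp
  have "in_ideal 2 (2 * rb p1 q1)" by (rule in_idealI[of "rb p1 q1"]) simp_all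
  hence "in_ideal 2 ((x + w) - (x - rb p1 q1) - 2 * rb p1 q1)" by (rule in_ideal_diff[OF in_ideal_diff[OF assms(5) 1]])
  hence 4: "in_ideal 2 (w - rb p1 q1)" unfolding e .
  show ?thesis using 1 3 4 5 by (intro exI[of _ "(p1,q1,p3,q3,p5,q5)"]) (simp add: Mres_def)
qed

lemma lev_eq: "lev m A X \<Longrightarrow> X = Y \<Longrightarrow> lev m A Y" by simp

definition pick :: "bool \<Rightarrow> real^2^2 \<Rightarrow> real^2^2" where "pick b u = (if b then u else mat 1)"

lemma lev_pick: "lev m u U \<Longrightarrow> lev m (pick b u) (of_bool b *\<^sub>R U)"
  by (cases b) (simp_all add: pick_def lev_one)

subsection \<open>Generators\<close>

fun sqit :: "nat \<Rightarrow> real^2^2 \<Rightarrow> real^2^2" where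
  "sqit 0 A = A"
| "sqit (Suc k) A = sqit k A ** sqit k A"

lemma lev_sqit: assumes "lev 4 A X" shows "lev (2 ^ (k+2)) (sqit k A) X"
proof (induction k)
  case 0 then show ?case using assms by simp
next
  case (Suc k)
  have "lev (2 * 2 ^ (k+2)) (sqit k A ** sqit k A) X"
    by (rule lev_square[OF Suc good_pow]) simp
  thus ?case by simp
qed

lemma Tpow_H5: "mk 1 (of_nat k * lam) 0 1 \<in> H5"
proof (induction k)
  case 0 then show ?case using H5_one by (simp add: mat1_mk)
next
  case (Suc k)
  have "mk 1 (of_nat k * lam) 0 1 ** matT \<in> H5" using Suc by simp
  thus ?case by (simp add: matT_mk algebra_simps)
qed

lemma lev_Tpow: "lev (2^n) (mk 1 (2^n * lam) 0 1) (mk 0 lam 0 0)"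
proof -
  have "mk 1 (of_nat (2^n) * lam) 0 1 \<in> H5" by (rule Tpow_H5)
  thus ?thesis by (simp add: lev_def mat1_mk)
qed

definition matG :: "real^2^2" where "matG = matT ** matS ** matT ** matS"

lemma matG_H5 [simp]: "matG \<in> H5" by (simp add: matG_def)
lemma matG_mk: "matG = mk lam (-lam) lam (-1)"
  by (simp add: matG_def matT_mk matS_mk lam_sq)

lemma mat_cong2I: "X = Y + 2 *\<^sub>R E \<Longrightarrow> Zmat E \<Longrightarrow> mat_cong 2 X Y"
  by (rule mat_congI)

context
  fixes \<sigma> :: "real^2^2" and n :: nat
  assumes sH: "\<sigma> \<in> Hcong 4"
    and sc: "mat_cong 8 \<sigma> (vector [vector [1, 4], vector [0, 1]])"
    and n2: "n \<ge> 2"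
begin

definition "gc = sqit (n-2) \<sigma>"
definition "ga = mk 1 (2^n * lam) 0 1"
definition "gd = matS ** gc ** adj matS"
definition "gb = matS ** ga ** adj matS"
definition "ge = matG ** gc ** adj matG"
definition "gf = matG ** ga ** adj matG"
definition "u1 = gf ** gc ** gd"
definition "u2 = ge ** gf ** ga ** gb"

lemma good_m: "good (2^n)" using n2 by (rule good_pow)

lemma lev_sigma: "lev 4 \<sigma> (mk 0 1 0 0)"
proof -
  have "vector [vector [1, 4], vector [0, 1]] = mat 1 + (4::real) *\<^sub>R mk 0 1 0 0"
    by (simp add: mat1_mk mk_def[symmetric])
  thus ?thesis using sH sc by (simp add: lev_def Hcong_iff)
qed

lemma lev_gc: "lev (2^n) gc (mk 0 1 0 0)"
proof -
  have e: "n - 2 + 2 = n" using n2 by simp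
  show ?thesis using lev_sqit[OF lev_sigma, of "n-2"] unfolding gc_def e .
qed

lemma lev_ga: "lev (2^n) ga (mk 0 lam 0 0)"
  unfolding ga_def by (rule lev_Tpow)

lemma lev_gd: "lev (2^n) gd (mk 0 0 1 0)"
proof -
  have "lev (2^n) gd (matS ** mk 0 1 0 0 ** adj matS)" unfolding gd_def by (rule lev_conj[OF lev_gc]) simp
  moreover have "mat_cong 2 (matS ** mk 0 1 0 0 ** adj matS) (mk 0 0 1 0)"
    by (rule mat_cong2I[where E="mk 0 0 (-1) 0"]) (simp_all add: matS_mk)
  ultimately show ?thesis by (rule lev_reduce) simp
qed

lemma lev_gb: "lev (2^n) gb (mk 0 0 lam 0)"
proof -
  have "lev (2^n) gb (matS ** mk 0 lam 0 0 ** adj matS)" unfolding gb_def by (rule lev_conj[OF lev_ga]) simp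
  moreover have "mat_cong 2 (matS ** mk 0 lam 0 0 ** adj matS) (mk 0 0 lam 0)"
    by (rule mat_cong2I[where E="mk 0 0 (-lam) 0"]) (simp_all add: matS_mk)
  ultimately show ?thesis by (rule lev_reduce) simp
qed

lemma lev_ge: "lev (2^n) ge (mk (1+lam) (1+lam) (1+lam) (1+lam))"
proof -
  have "lev (2^n) ge (matG ** mk 0 1 0 0 ** adj matG)" unfolding ge_def by (rule lev_conj[OF lev_gc]) simp
  moreover have "mat_cong 2 (matG ** mk 0 1 0 0 ** adj matG) (mk (1+lam) (1+lam) (1+lam) (1+lam))"
    by (rule mat_cong2I[where E="mk (-1-lam) 0 (-1-lam) 0"]) (simp_all add: matG_mk lam_sq algebra_simps)
  ultimately show ?thesis by (rule lev_reduce) simp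
qed

lemma lev_gf: "lev (2^n) gf (mk 1 1 1 1)"
proof -
  have "lev (2^n) gf (matG ** mk 0 lam 0 0 ** adj matG)" unfolding gf_def by (rule lev_conj[OF lev_ga]) simp
  moreover have "mat_cong 2 (matG ** mk 0 lam 0 0 ** adj matG) (mk 1 1 1 1)"
    by (rule mat_cong2I[where E="mk (-1-lam) lam (-1-lam) lam"]) (simp_all add: matG_mk lam_sq algebra_simps)
  ultimately show ?thesis by (rule lev_reduce) simp
qed

lemma lev_u1: "lev (2^n) u1 (mat 1)"
proof -
  have "lev (2^n) u1 (mk 1 1 1 1 + mk 0 1 0 0 + mk 0 0 1 0)"
    unfolding u1_def by (intro lev_mult lev_gf lev_gc lev_gd good_m)
  moreover have "mat_cong 2 (mk 1 1 1 1 + mk 0 1 0 0 + mk 0 0 1 0) (mat 1)"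
    by (rule mat_cong2I[where E="mk 0 1 1 0"]) (simp_all add: mat1_mk)
  ultimately show ?thesis by (rule lev_reduce) simp
qed

lemma lev_u2: "lev (2^n) u2 (lam *\<^sub>R mat 1)"
proof -
  have "lev (2^n) u2 (mk (1+lam) (1+lam) (1+lam) (1+lam) + mk 1 1 1 1 + mk 0 lam 0 0 + mk 0 0 lam 0)"
    unfolding u2_def by (intro lev_mult lev_gf lev_ge lev_ga lev_gb good_m)
  moreover have "mat_cong 2 (mk (1+lam) (1+lam) (1+lam) (1+lam) + mk 1 1 1 1 + mk 0 lam 0 0 + mk 0 0 lam 0) (lam *\<^sub>R mat 1)"
    by (rule mat_cong2I[where E="mk 1 (1+lam) (1+lam) 1"]) (simp_all add: mat1_mk algebra_simps)
  ultimately show ?thesis by (rule lev_reduce) simp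
qed


definition eb :: "bool \<times> bool \<times> bool \<times> bool \<times> bool \<times> bool \<Rightarrow> real^2^2" where
  "eb t = (case t of (t1,t2,t3,t4,t5,t6) \<Rightarrow>
     pick t1 u1 ** pick t2 u2 ** pick t3 gc ** pick t4 ga ** pick t5 gd ** pick t6 gb)"

lemma lev_eb: "lev (2^n) (eb t) (Mres t)"
proof -
  obtain t1 t2 t3 t4 t5 t6 where t: "t = (t1,t2,t3,t4,t5,t6)" by (cases t) auto
  have "lev (2^n) (eb t) (of_bool t1 *\<^sub>R mat 1 + of_bool t2 *\<^sub>R (lam *\<^sub>R mat 1) + of_bool t3 *\<^sub>R mk 0 1 0 0
      + of_bool t4 *\<^sub>R mk 0 lam 0 0 + of_bool t5 *\<^sub>R mk 0 0 1 0 + of_bool t6 *\<^sub>R mk 0 0 lam 0)"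
    unfolding t eb_def prod.case
    by (intro lev_mult lev_pick lev_u1 lev_u2 lev_gc lev_ga lev_gd lev_gb good_m)
  thus ?thesis by (rule lev_eq) (simp add: t Mres_def rb_def mat1_mk)
qed

lemma eb_Hcong: "eb t \<in> Hcong (2^n)"
  using lev_Hcong[OF lev_eb] by simp

lemma eb_H5: "eb t \<in> H5"
  using lev_eb by (simp add: lev_def)

lemma eb_inj: "mat_cong (2*2^n) (eb t) (eb t') \<Longrightarrow> t = t'"
  by (rule Mres_inj, rule lev_cong_res[OF lev_eb lev_eb]) simp_all

lemma eb_surj: assumes "A \<in> Hcong (2^n)" shows "\<exists>t. mat_cong (2*2^n) A (eb t)"
proof -
  obtain x y z w where h: "x \<in> Zlam" "y \<in> Zlam" "z \<in> Zlam" "w \<in> Zlam" "A = mat 1 + 2^n *\<^sub>R mk x y z w" "in_ideal 2 (x + w)"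
    using res_exists[OF assms good_m] by blast
  obtain t where "mat_cong 2 (mk x y z w) (Mres t)" using Mres_exists[OF h(1-4) h(6)] by blast
  hence c1: "mat_cong (2*2^n) A (mat 1 + 2^n *\<^sub>R Mres t)" unfolding h(5) by (rule cong_lift)
  have "mat_cong (2*2^n) (eb t) (mat 1 + 2^n *\<^sub>R Mres t)" using lev_eb by (simp add: lev_def)
  thus ?thesis using c1 by (meson mat_cong_sym mat_cong_trans)
qed


lemma card_bool6: "card (UNIV :: (bool \<times> bool \<times> bool \<times> bool \<times> bool \<times> bool) set) = 64"
  by (simp only: UNIV_Times_UNIV[symmetric] card_cartesian_product) simp

lemma cong_weaken2: "mat_cong (2*2^n) a b \<Longrightarrow> mat_cong (2^n) a b"
  by (rule mat_cong_weaken[of _ 2]) (simp_all add: mult.commute)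

lemma part1: "card ((\<lambda>a. Hcong (2*2^n) #>\<^bsub>SL2\<^esub> a) ` Hcong (2^n)) = 64"
proof -
  let ?C = "\<lambda>a. Hcong (2*2^n) #>\<^bsub>SL2\<^esub> a"
  have eq: "?C ` Hcong (2^n) = (\<lambda>t. ?C (eb t)) ` UNIV"
  proof
    show "?C ` Hcong (2^n) \<subseteq> (\<lambda>t. ?C (eb t)) ` UNIV"
    proof
      fix X assume "X \<in> ?C ` Hcong (2^n)"
      then obtain a where a: "a \<in> Hcong (2^n)" "X = ?C a" by blast
      obtain t where "mat_cong (2*2^n) a (eb t)" using eb_surj[OF a(1)] by blast
      hence "?C a = ?C (eb t)" using coset_eq[OF Hcong_H5[OF a(1)] eb_H5] by simp
      thus "X \<in> (\<lambda>t. ?C (eb t)) ` UNIV" using a(2) by simp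
    qed
    show "(\<lambda>t. ?C (eb t)) ` UNIV \<subseteq> ?C ` Hcong (2^n)" using eb_Hcong by blast
  qed
  have inj: "inj (\<lambda>t. ?C (eb t))"
  proof (rule injI)
    fix t t' assume "?C (eb t) = ?C (eb t')"
    hence "mat_cong (2*2^n) (eb t) (eb t')" using coset_eq[OF eb_H5 eb_H5] by simp
    thus "t = t'" by (rule eb_inj)
  qed
  show ?thesis unfolding eq card_image[OF inj] card_bool6 ..
qed

lemma part2: "card ((\<lambda>a. Hcong (2*2^n) #>\<^bsub>SL2\<^esub> a) ` H5) = 64 * card ((\<lambda>a. Hcong (2^n) #>\<^bsub>SL2\<^esub> a) ` H5)"
proof -
  let ?C1 = "\<lambda>a. Hcong (2^n) #>\<^bsub>SL2\<^esub> a"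
  let ?C2 = "\<lambda>a. Hcong (2*2^n) #>\<^bsub>SL2\<^esub> a"
  define B where "B = ?C1 ` H5"
  define Fib where "Fib \<beta> = ?C2 ` {a \<in> H5. ?C1 a = \<beta>}" for \<beta>
  have union: "?C2 ` H5 = \<Union> (Fib ` B)" unfolding Fib_def B_def by blast
  have fib: "Fib (?C1 b) = (\<lambda>t. ?C2 (eb t ** b)) ` UNIV" and fibinj: "inj (\<lambda>t. ?C2 (eb t ** b))"
    if b: "b \<in> H5" for b
  proof -
    have Zb: "Zmat b" "Zmat (adj b)" using b H5_Zmat by auto
    show "Fib (?C1 b) = (\<lambda>t. ?C2 (eb t ** b)) ` UNIV"
    proof
      show "Fib (?C1 b) \<subseteq> (\<lambda>t. ?C2 (eb t ** b)) ` UNIV"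
      proof
        fix X assume "X \<in> Fib (?C1 b)"
        then obtain a where a: "a \<in> H5" "?C1 a = ?C1 b" "X = ?C2 a" unfolding Fib_def by blast
        have ab: "mat_cong (2^n) a b" using a(2) coset_eq[OF a(1) b] by simp
        define k where "k = a ** adj b"
        have kH: "k \<in> H5" unfolding k_def using a(1) b by simp
        have "mat_cong (2^n) k (b ** adj b)" unfolding k_def by (rule mat_cong_multR[OF ab Zb(2)])
        hence "k \<in> Hcong (2^n)" using kH mult_adj[OF H5_det[OF b]] by (simp add: Hcong_iff)
        then obtain t where "mat_cong (2*2^n) k (eb t)" using eb_surj by blast
        hence "mat_cong (2*2^n) (k ** b) (eb t ** b)" by (rule mat_cong_multR[OF _ Zb(1)])
        moreover have "k ** b = a" unfolding k_def
          by (simp add: matrix_mul_assoc[symmetric] adj_mult[OF H5_det[OF b]])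
        ultimately have "mat_cong (2*2^n) a (eb t ** b)" by simp
        hence "?C2 a = ?C2 (eb t ** b)" using coset_eq[OF a(1)] eb_H5 b by simp
        thus "X \<in> (\<lambda>t. ?C2 (eb t ** b)) ` UNIV" using a(3) by simp
      qed
      show "(\<lambda>t. ?C2 (eb t ** b)) ` UNIV \<subseteq> Fib (?C1 b)"
      proof
        fix X assume "X \<in> (\<lambda>t. ?C2 (eb t ** b)) ` UNIV"
        then obtain t where t: "X = ?C2 (eb t ** b)" by blast
        have "mat_cong (2^n) (eb t) (mat 1)" using eb_Hcong by (simp add: Hcong_iff)
        hence "mat_cong (2^n) (eb t ** b) (mat 1 ** b)" by (rule mat_cong_multR[OF _ Zb(1)])
        hence "?C1 (eb t ** b) = ?C1 b" using coset_eq[of "eb t ** b" b] eb_H5 b by simp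
        moreover have "eb t ** b \<in> H5" using eb_H5 b by simp
        ultimately show "X \<in> Fib (?C1 b)" unfolding Fib_def t by blast
      qed
    qed
    show "inj (\<lambda>t. ?C2 (eb t ** b))"
    proof (rule injI)
      fix t t' assume "?C2 (eb t ** b) = ?C2 (eb t' ** b)"
      hence "mat_cong (2*2^n) (eb t ** b) (eb t' ** b)" using coset_eq[of "eb t ** b" "eb t' ** b"] eb_H5 b by simp
      hence "mat_cong (2*2^n) (eb t ** b ** adj b) (eb t' ** b ** adj b)" by (rule mat_cong_multR[OF _ Zb(2)])
      hence "mat_cong (2*2^n) (eb t) (eb t')"
        by (simp add: matrix_mul_assoc[symmetric] mult_adj[OF H5_det[OF b]])
      thus "t = t'" by (rule eb_inj)
    qed
  qed
  have card64: "card (Fib \<beta>) = 64" if "\<beta> \<in> B" for \<beta>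
  proof -
    from that obtain b where b: "b \<in> H5" "\<beta> = ?C1 b" unfolding B_def by blast
    show ?thesis unfolding b(2) fib[OF b(1)] card_image[OF fibinj[OF b(1)]] card_bool6 ..
  qed
  have disj: "Fib \<beta> \<inter> Fib \<beta>' = {}" if "\<beta> \<in> B" "\<beta>' \<in> B" "\<beta> \<noteq> \<beta>'" for \<beta> \<beta>'
  proof (rule ccontr)
    assume "Fib \<beta> \<inter> Fib \<beta>' \<noteq> {}"
    then obtain a a' where a: "a \<in> H5" "?C1 a = \<beta>" "a' \<in> H5" "?C1 a' = \<beta>'" "?C2 a = ?C2 a'"
      unfolding Fib_def by blast
    hence "mat_cong (2*2^n) a a'" using coset_eq by blast
    hence "mat_cong (2^n) a a'" by (rule cong_weaken2)
    hence "?C1 a = ?C1 a'" using coset_eq a by blast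
    thus False using a that by simp
  qed
  show ?thesis
  proof (cases "finite B")
    case True
    have "card (\<Union> (Fib ` B)) = (\<Sum>\<beta>\<in>B. card (Fib \<beta>))"
    proof (rule card_UN_disjoint[OF True])
      show "\<forall>i\<in>B. finite (Fib i)" using card64 by (metis card.infinite zero_neq_numeral)
      show "\<forall>i\<in>B. \<forall>j\<in>B. i \<noteq> j \<longrightarrow> Fib i \<inter> Fib j = {}" using disj by blast
    qed
    also have "\<dots> = 64 * card B" using card64 by simp
    finally show ?thesis unfolding union B_def .
  next
    case False
    have "infinite (\<Union> (Fib ` B))"
    proof
      assume fin: "finite (\<Union> (Fib ` B))"
      hence "finite (Fib ` B)" by (rule finite_UnionD)
      moreover have "inj_on Fib B"
      proof (rule inj_onI)
        fix \<beta> \<beta>' assume h: "\<beta> \<in> B" "\<beta>' \<in> B" "Fib \<beta> = Fib \<beta>'"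
        show "\<beta> = \<beta>'"
        proof (rule ccontr)
          assume "\<beta> \<noteq> \<beta>'"
          hence "Fib \<beta> = {}" using disj[OF h(1,2)] h(3) by simp
          thus False using card64[OF h(1)] by simp
        qed
      qed
      ultimately have "finite B" using finite_imageD by blast
      thus False using False by simp
    qed
    thus ?thesis using False unfolding union B_def by simp
  qed
qed

end


theorem corollary4p3:
  assumes "\<exists>\<sigma>\<in>Hcong 4. mat_cong 8 \<sigma> (vector [vector [1, 4], vector [0, 1]])"
  shows "(\<forall>n::nat. n \<ge> 2 \<longrightarrow> idx (Hcong (2 ^ n)) (Hcong (2 ^ (n + 1))) = 2 ^ 6)
       \<and> (\<forall>n::nat. n \<ge> 2 \<longrightarrow> idx H5 (Hcong (2 ^ n)) = 2 ^ (6 * (n - 2)) * idx H5 (Hcong 4))"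
proof -
  from assms obtain \<sigma> where sH: "\<sigma> \<in> Hcong 4" and sc: "mat_cong 8 \<sigma> (vector [vector [1, 4], vector [0, 1]])"
    by blast
  have P1: "idx (Hcong (2 ^ n)) (Hcong (2 ^ (n + 1))) = 2 ^ 6" if n: "n \<ge> 2" for n :: nat
  proof -
    have "(2::real) ^ (n + 1) = 2 * 2 ^ n" by simp
    thus ?thesis unfolding idx_eq using part1[OF sH sc n] by simp
  qed
  have stp: "idx H5 (Hcong (2 ^ Suc n)) = 64 * idx H5 (Hcong (2 ^ n))" if n: "n \<ge> 2" for n :: nat
  proof -
    have "(2::real) ^ Suc n = 2 * 2 ^ n" by simp
    thus ?thesis unfolding idx_eq using part2[OF sH sc n] by simp
  qed
  have P2: "idx H5 (Hcong (2 ^ n)) = 2 ^ (6 * (n - 2)) * idx H5 (Hcong 4)" if n: "n \<ge> 2" for n :: nat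
    using n
  proof (induction n rule: dec_induct)
    case base then show ?case by simp
  next
    case (step k)
    have e: "6 * (Suc k - 2) = 6 * (k - 2) + 6" using step.hyps(1) by simp
    show ?case unfolding stp[OF step.hyps(1)] step.IH e by (simp add: power_add)
  qed
  show ?thesis using P1 P2 by blast
qed

end
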